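(* Consider an $n$-th order strictly proper SISO system with transfer function \[ P(s)=\frac{y(s)}{u(s)}=\frac{b_1s^{n-1}+\dots+b_{n-1}s+b_n}{s^n+a_1s^{n-1}+\dots+a_{n-1}s+a_n}, \] with unknown coefficients $a_i\in[\underline a_i,\bar a_i]$ and $b_j\in[\underline b_j,\bar b_j]$ for $i,j=1,\dots,n$. Let $c_0=[1,0,\dots,0]$ and let $A_0\in\mathbb{R}^{n\times n}$ be a strictly stable matrix in observable canonical form with characteristic polynomial $s^n+\hat a_1s^{n-1}+\dots+\hat a_n$ (ones on the superdiagonal, first column $-[\hat a_1,\dots,\hat a_n]^T$, zeros elsewhere). Realize the system as $\dot x=A_0x+b_yy+b_uu$, $y=c_0x$, with $b_y=[\hat a_1-a_1,\dots,\hat a_n-a_n]^T$ and $b_u=[b_1,\dots,b_n]^T$. Let $\theta_y,\theta_u$ satisfy $\dot\theta_y=A_0^T\theta_y+c_0^Ty$, $\dot\theta_u=A_0^T\theta_u+c_0^Tu$; let $C_0$ be the observability matrix of $(c_0,A_0)$ (rows $c_0A_0^{k}$, $k=0,\dots,n-1$), $\Theta_y,\Theta_u$ the controllability matrices $[\theta,A_0^T\theta,\dots,(A_0^T)^{n-1}\theta]$ for $\theta=\theta_y,\theta_u$, and $E_y=C_0^{-1}\Theta_y^T$, $E_u=C_0^{-1}\Theta_u^T$. For parameter vectors define $\hat x(b_y,b_u)=E_yb_y+E_ub_u$, and let $\hat x(b_{yi},b_{ui})$, $i=1,\dots,N$, be all the vertices of the convex hull of the points $E_y[\hat a_1-a_1,\dots,\hat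 a_n-a_n]^T+E_u[b_1,\dots,b_n]^T$ with $a_i\in\{\underline a_i,\bar a_i\}$, $b_j\in\{\underline b_j,\bar b_j\}$. Let $\epsilon_0=x(0)-\hat x(0)$, where $\hat x$ is evaluated at the true coefficients. Let $Q\succ0$ and $\|x\|_q=(x^TQ^{-1}x)^{1/2}$. If \[ A_0Q+QA_0^T+2\alpha Q\preceq 0, \] then for every $t\ge0$ there exists $i\in\{1,\dots,N\}$ such that \[ \|x(t)\|_q\le\|\hat x(b_{yi},b_{ui})(t)\|_q+e^{-\alpha t}\|\epsilon_0\|_q . \]
   Context: $\hat x(b_{yi},b_{ui})(t)$ denotes $E_y(t)b_{yi}+E_u(t)b_{ui}$, computable from the measured $u,y$ through the filters. *)

theory Defs
  imports "HOL-Analysis.Analysis" "HOL-Computational_Algebra.Polynomial"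
begin

text \<open>Coordinates of real^('n::{finite,linorder}) are ordered by the linear order on 'n; pos i is the
  0-based position of coordinate i, so coordinate i corresponds to index pos i + 1
  of the paper.\<close>
definition pos :: "'n::{finite,linorder} \<Rightarrow> nat" where
  "pos i = card {j. j < i}"

definition mpow :: "real^('n::{finite,linorder})^('n::{finite,linorder}) \<Rightarrow> nat \<Rightarrow> real^('n::{finite,linorder})^('n::{finite,linorder})" where
  "mpow A k = (((**) A) ^^ k) (mat 1)"

definition obs_canon :: "real^('n::{finite,linorder}) \<Rightarrow> real^('n::{finite,linorder})^('n::{finite,linorder})" where
  "obs_canon ahat = (\<chi> i j. (if pos j = pos i + 1 then 1 else 0)
                             - (if pos j = 0 then ahat $ i else 0))"

definition canon_charpoly :: "real^('n::{finite,linorder}) \<Rightarrow> real poly" where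
  "canon_charpoly ahat = monom 1 CARD('n) + (\<Sum>i\<in>UNIV. monom (ahat $ i) (CARD('n) - 1 - pos i))"

definition strictly_stable_canon :: "real^('n::{finite,linorder}) \<Rightarrow> bool" where
  "strictly_stable_canon ahat \<longleftrightarrow>
     (\<forall>z::complex. poly (map_poly of_real (canon_charpoly ahat)) z = 0 \<longrightarrow> Re z < 0)"

definition c0 :: "real^('n::{finite,linorder})" where
  "c0 = (\<chi> i. if pos i = 0 then 1 else 0)"

definition obsv_mat :: "real^('n::{finite,linorder}) \<Rightarrow> real^('n::{finite,linorder})^('n::{finite,linorder}) \<Rightarrow> real^('n::{finite,linorder})^('n::{finite,linorder})" where
  "obsv_mat c A = (\<chi> i. c v* mpow A (pos i))"

definition ctrb_mat :: "real^('n::{finite,linorder})^('n::{finite,linorder}) \<Rightarrow> real^('n::{finite,linorder}) \<Rightarrow> real^('n::{finite,linorder})^('n::{finite,linorder})" where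
  "ctrb_mat A th = (\<chi> r c. (mpow A (pos c) *v th) $ r)"

definition qnorm :: "real^('n::{finite,linorder})^('n::{finite,linorder}) \<Rightarrow> real^('n::{finite,linorder}) \<Rightarrow> real" where
  "qnorm Q v = sqrt (v \<bullet> (matrix_inv Q *v v))"

definition pos_def_mat :: "real^('n::{finite,linorder})^('n::{finite,linorder}) \<Rightarrow> bool" where
  "pos_def_mat Q \<longleftrightarrow> transpose Q = Q \<and> (\<forall>v. v \<noteq> 0 \<longrightarrow> 0 < v \<bullet> (Q *v v))"

definition neg_semidef_mat :: "real^('n::{finite,linorder})^('n::{finite,linorder}) \<Rightarrow> bool" where
  "neg_semidef_mat M \<longleftrightarrow> transpose M = M \<and> (\<forall>v. v \<bullet> (M *v v) \<le> 0)"

end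

theory Submission
  imports Defs
begin


lemma pos_less: "i < j \<Longrightarrow> pos i < pos (j::'n::{finite,linorder})"
  unfolding pos_def by (rule psubset_card_mono) auto

lemma pos_inj: "inj (pos :: 'n::{finite,linorder} \<Rightarrow> nat)"
  by (metis injI linorder_neqE_nat linorder_neq_iff pos_less less_irrefl)

lemma pos_eq_iff: "pos i = pos j \<longleftrightarrow> i = (j::'n::{finite,linorder})"
  using pos_inj by (auto dest: injD)

lemma pos_lt_card: "pos (i::'n::{finite,linorder}) < CARD('n)"
  unfolding pos_def by (rule psubset_card_mono) auto

lemma pos_image: "range (pos :: 'n::{finite,linorder} \<Rightarrow> nat) = {..<CARD('n)}"
proof -
  have "range (pos :: 'n \<Rightarrow> nat) \<subseteq> {..<CARD('n)}" using pos_lt_card by auto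
  moreover have "card (range (pos :: 'n \<Rightarrow> nat)) = CARD('n)"
    using card_image[OF pos_inj] by simp
  ultimately show ?thesis by (simp add: card_subset_eq)
qed

lemma pos_surj: "m < CARD('n) \<Longrightarrow> \<exists>i::'n::{finite,linorder}. pos i = m"
  using pos_image by (metis imageE lessThan_iff)

lemma mpow_0[simp]: "mpow A 0 = mat 1" by (simp add: mpow_def)
lemma mpow_Suc: "mpow A (Suc k) = A ** mpow A k" by (simp add: mpow_def)
lemma mpow_add: "mpow A (m + k) = mpow A m ** mpow A k"
  by (induction m) (simp_all add: mpow_Suc matrix_mul_assoc)
lemma mpow_Suc': "mpow A (Suc k) = mpow A k ** A"
  using mpow_add[of A k 1] by (simp add: mpow_Suc)
lemma mpow_comm: "mpow A m ** mpow A k = mpow A k ** mpow A m"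
  by (metis mpow_add add.commute)
lemma mpow_transpose: "mpow (transpose A) k = transpose (mpow A k)"
proof (induction k)
  case (Suc k)
  have "transpose (mpow A (Suc k)) = transpose A ** transpose (mpow A k)"
    by (simp add: mpow_Suc' matrix_transpose_mul)
  then show ?case using Suc by (simp add: mpow_Suc)
qed simp

lemma obs_shift:
  fixes v :: "real^'n::{finite,linorder}"
  assumes "pos j = pos i + 1"
  shows "(v v* obs_canon ah) $ j = v $ i"
proof -
  have "(v v* obs_canon ah) $ j = (\<Sum>l\<in>UNIV. v$l * ((if pos j = pos l + 1 then 1 else 0)
         - (if pos j = 0 then ah $ l else 0)))"
    by (simp add: vector_matrix_mult_def obs_canon_def)
  also have "\<dots> = (\<Sum>l\<in>UNIV. if l = i then v$i else 0)"
    using assms by (intro sum.cong) (auto simp: pos_eq_iff)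
  finally show ?thesis by simp
qed

lemma c0_pow:
  fixes ah :: "real^'n::{finite,linorder}" and j :: 'n
  shows "k \<le> pos j \<Longrightarrow> ((c0::real^'n::{finite,linorder}) v* mpow (obs_canon ah) k) $ j = (if pos j = k then 1 else 0)"
proof (induction k arbitrary: j)
  case 0
  then show ?case by (simp add: c0_def)
next
  case (Suc k)
  have "\<exists>i::'n. pos i = pos j - 1"
    by (rule pos_surj) (use pos_lt_card[of j] in linarith)
  then obtain i :: 'n where i: "pos i = pos j - 1" by blast
  have "(c0 v* mpow (obs_canon ah) (Suc k)) $ j
        = ((c0 v* mpow (obs_canon ah) k) v* obs_canon ah) $ j"
    by (simp add: mpow_Suc' vector_matrix_mul_assoc)
  also have "\<dots> = (c0 v* mpow (obs_canon ah) k) $ i"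
    using Suc.prems i by (intro obs_shift) auto
  also have "\<dots> = (if pos i = k then 1 else 0)"
    using Suc.prems i by (intro Suc.IH) auto
  finally show ?case using Suc.prems i by auto
qed

lemma obsv_inj:
  fixes ah :: "real^'n::{finite,linorder}"
  assumes "obsv_mat c0 (obs_canon ah) *v v = 0"
  shows "v = 0"
proof -
  have "\<forall>j::'n. pos j = m \<longrightarrow> v $ j = 0" for m
  proof (induction m rule: less_induct)
    case (less m)
    show ?case
    proof (intro allI impI)
      fix j :: 'n assume j: "pos j = m"
      have "0 = (obsv_mat c0 (obs_canon ah) *v v) $ j" using assms by simp
      also have "\<dots> = (\<Sum>l\<in>UNIV. (c0 v* mpow (obs_canon ah) m) $ l * v $ l)"
        by (simp add: matrix_vector_mult_def obsv_mat_def j)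
      also have "\<dots> = (\<Sum>l\<in>UNIV. if l = j then v $ j else 0)"
      proof (intro sum.cong refl)
        fix l :: 'n
        consider "pos l < m" | "pos l = m" | "pos l > m" by linarith
        then show "(c0 v* mpow (obs_canon ah) m) $ l * v $ l = (if l = j then v $ j else 0)"
        proof cases
          case 1 then show ?thesis using less.IH j by auto
        next
          case 2 then show ?thesis using c0_pow[of m l ah] j by (auto simp: pos_eq_iff)
        next
          case 3 then show ?thesis using c0_pow[of m l ah] j by auto
        qed
      qed
      finally show "v $ j = 0" by simp
    qed
  qed
  then show ?thesis by (simp add: vec_eq_iff)
qed

lemma obsv_invertible:
  "invertible (obsv_mat c0 (obs_canon (ah::real^'n::{finite,linorder})))"
  using obsv_inj[of ah] matrix_left_invertible_ker(1) invertible_left_inverse by blast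

lemma matrix_inv_props:
  assumes "invertible (A::real^'n^'n)"
  shows "A ** matrix_inv A = mat 1" "matrix_inv A ** A = mat 1"
  using someI_ex[OF assms[unfolded invertible_def]] by (auto simp: matrix_inv_def)



lemma obsv_row:
  "(obsv_mat c0 A *v \<gamma>) $ d = c0 \<bullet> (mpow A (pos d) *v (\<gamma>::real^'n::{finite,linorder}))"
proof -
  have "(obsv_mat c0 A *v \<gamma>) $ d = (obsv_mat c0 A $ d) \<bullet> \<gamma>"
    by (simp add: matrix_vector_mult_def inner_vec_def)
  then show ?thesis by (simp add: obsv_mat_def dot_lmul_matrix)
qed

lemma mv_sum: "(M::real^'n^'m) *v (\<Sum>d\<in>S. f d) = (\<Sum>d\<in>S. M *v f d)"
  using linear_sum[OF matrix_vector_mul_linear[of M], of f S] by (simp add: o_def)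

lemma key_pow:
  fixes ah :: "real^'n::{finite,linorder}"
  defines "A \<equiv> obs_canon ah"
  defines "C \<equiv> obsv_mat c0 A"
  defines "G \<equiv> C ** A ** matrix_inv C"
  shows "mpow A (Suc (pos c)) *v \<beta> = (\<Sum>d\<in>UNIV. G$c$d *\<^sub>R (mpow A (pos d) *v \<beta>))"
proof -
  have inv: "matrix_inv C ** C = mat 1"
    using matrix_inv_props(2)[OF obsv_invertible[of ah]] by (simp add: C_def A_def)
  have GC: "G ** C = C ** A"
  proof -
    have "G ** C = (C ** A) ** (matrix_inv C ** C)" by (simp add: G_def matrix_mul_assoc)
    then show ?thesis by (simp add: inv)
  qed
  have star: "c0 \<bullet> (mpow A (Suc (pos c)) *v \<gamma>) = (\<Sum>d\<in>UNIV. G$c$d * (c0 \<bullet> (mpow A (pos d) *v \<gamma>)))"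
    for \<gamma> c
  proof -
    have "(G *v (C *v \<gamma>)) $ c = (C *v (A *v \<gamma>)) $ c"
      by (simp add: matrix_vector_mul_assoc GC)
    moreover have "(G *v (C *v \<gamma>)) $ c = (\<Sum>d\<in>UNIV. G$c$d * (c0 \<bullet> (mpow A (pos d) *v \<gamma>)))"
    proof -
      have "(G *v w) $ c = (\<Sum>d\<in>UNIV. G$c$d * w $ d)" for w
        by (simp add: matrix_vector_mult_def)
      then show ?thesis by (simp add: C_def obsv_row)
    qed
    moreover have "(C *v (A *v \<gamma>)) $ c = c0 \<bullet> (mpow A (Suc (pos c)) *v \<gamma>)"
      using obsv_row[of A "A *v \<gamma>" c] by (simp add: C_def matrix_vector_mul_assoc mpow_Suc')
    ultimately show ?thesis by simp
  qed
  define \<delta> where "\<delta> = mpow A (Suc (pos c)) *v \<beta> - (\<Sum>d\<in>UNIV. G$c$d *\<^sub>R (mpow A (pos d) *v \<beta>))"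
  have "C *v \<delta> = 0"
  proof (subst vec_eq_iff, intro allI)
    fix k :: 'n
    define \<gamma> where "\<gamma> = mpow A (pos k) *v \<beta>"
    have comm: "mpow A (pos k) *v (mpow A m *v \<beta>) = mpow A m *v \<gamma>" for m
      by (simp add: \<gamma>_def matrix_vector_mul_assoc mpow_comm)
    have "mpow A (pos k) *v \<delta> = mpow A (Suc (pos c)) *v \<gamma> - (\<Sum>d\<in>UNIV. G$c$d *\<^sub>R (mpow A (pos d) *v \<gamma>))"
      by (simp add: \<delta>_def matrix_vector_mult_diff_distrib mv_sum matrix_vector_mult_scaleR comm)
    then have "c0 \<bullet> (mpow A (pos k) *v \<delta>) = 0"
      by (simp add: inner_diff_right inner_sum_right star)
    then show "(C *v \<delta>) $ k = 0 $ k" by (simp add: C_def obsv_row)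
  qed
  then have "\<delta> = 0" using obsv_inj[of ah] by (simp add: C_def A_def)
  then show ?thesis by (simp add: \<delta>_def)
qed



definition Mb :: "real^('n::{finite,linorder})^('n::{finite,linorder}) \<Rightarrow> real^('n::{finite,linorder}) \<Rightarrow> real^('n::{finite,linorder})^('n::{finite,linorder})" where
  "Mb A \<beta> = (\<chi> c r. (mpow A (pos c) *v \<beta>) $ r)"

lemma Mb_mv: "Mb A \<beta> *v \<theta> = (\<chi> c. (mpow A (pos c) *v \<beta>) \<bullet> \<theta>)"
  by (simp add: Mb_def matrix_vector_mult_def inner_vec_def vec_eq_iff)

lemma Mb_c0: "Mb A \<beta> *v c0 = obsv_mat c0 A *v \<beta>"
  by (simp add: Mb_mv vec_eq_iff obsv_row inner_commute)

lemma ctrb_eq: "transpose (ctrb_mat (transpose A) \<theta>) *v \<beta> = Mb A \<beta> *v \<theta>"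
proof -
  have "(transpose (ctrb_mat (transpose A) \<theta>) *v \<beta>) $ c = (mpow (transpose A) (pos c) *v \<theta>) \<bullet> \<beta>" for c
    by (simp add: ctrb_mat_def transpose_def matrix_vector_mult_def inner_vec_def)
  also have "(mpow (transpose A) (pos c) *v \<theta>) \<bullet> \<beta> = (mpow A (pos c) *v \<beta>) \<bullet> \<theta>" for c
    by (simp add: mpow_transpose) (metis dot_lmul_matrix inner_commute)
  finally show ?thesis by (simp add: Mb_mv vec_eq_iff)
qed

lemma Mb_AT:
  fixes ah :: "real^'n::{finite,linorder}"
  defines "A \<equiv> obs_canon ah"
  defines "C \<equiv> obsv_mat c0 A"
  shows "Mb A \<beta> *v (transpose A *v \<theta>) = C *v (A *v (matrix_inv C *v (Mb A \<beta> *v \<theta>)))"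
proof -
  define G where "G = C ** A ** matrix_inv C"
  have "(Mb A \<beta> *v (transpose A *v \<theta>)) $ c = (G *v (Mb A \<beta> *v \<theta>)) $ c" for c
  proof -
    have "(Mb A \<beta> *v (transpose A *v \<theta>)) $ c = (mpow A (Suc (pos c)) *v \<beta>) \<bullet> \<theta>"
      by (simp add: Mb_mv dot_lmul_matrix inner_commute mpow_Suc matrix_vector_mul_assoc)
    also have "\<dots> = (\<Sum>d\<in>UNIV. G$c$d *\<^sub>R (mpow A (pos d) *v \<beta>)) \<bullet> \<theta>"
      using key_pow[of ah c \<beta>] by (simp add: A_def C_def G_def)
    also have "\<dots> = (G *v (Mb A \<beta> *v \<theta>)) $ c"
    proof -
      have row: "(G *v w) $ c = (\<Sum>d\<in>UNIV. G$c$d * w $ d)" for w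
        by (simp add: matrix_vector_mult_def)
      show ?thesis using row[of "Mb A \<beta> *v \<theta>"] by (simp add: inner_sum_left Mb_mv)
    qed
    finally show ?thesis .
  qed
  then show ?thesis by (simp add: vec_eq_iff G_def matrix_vector_mul_assoc matrix_mul_assoc)
qed

lemma L_props:
  fixes ah :: "real^'n::{finite,linorder}"
  defines "A \<equiv> obs_canon ah"
  defines "C \<equiv> obsv_mat c0 A"
  shows "(matrix_inv C ** Mb A \<beta>) *v c0 = \<beta>"
    and "(matrix_inv C ** Mb A \<beta>) *v (transpose A *v \<theta>) = A *v ((matrix_inv C ** Mb A \<beta>) *v \<theta>)"
proof -
  have inv: "matrix_inv C ** C = mat 1"
    using matrix_inv_props(2)[OF obsv_invertible[of ah]] by (simp add: C_def A_def)
  show "(matrix_inv C ** Mb A \<beta>) *v c0 = \<beta>"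
    by (simp add: Mb_c0 C_def[symmetric] matrix_vector_mul_assoc[symmetric])
       (simp add: matrix_vector_mul_assoc inv)
  show "(matrix_inv C ** Mb A \<beta>) *v (transpose A *v \<theta>) = A *v ((matrix_inv C ** Mb A \<beta>) *v \<theta>)"
  proof -
    have "(matrix_inv C ** Mb A \<beta>) *v (transpose A *v \<theta>) = matrix_inv C *v (Mb A \<beta> *v (transpose A *v \<theta>))"
      by (simp add: matrix_vector_mul_assoc)
    also have "\<dots> = matrix_inv C *v (C *v (A *v (matrix_inv C *v (Mb A \<beta> *v \<theta>))))"
      using Mb_AT[of ah \<beta> \<theta>] unfolding A_def[symmetric] C_def[symmetric] by simp
    also have "\<dots> = (matrix_inv C ** C) *v (A *v (matrix_inv C *v (Mb A \<beta> *v \<theta>)))"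
      by (simp add: matrix_vector_mul_assoc matrix_mul_assoc)
    also have "\<dots> = A *v ((matrix_inv C ** Mb A \<beta>) *v \<theta>)"
      by (simp add: inv matrix_vector_mul_assoc)
    finally show ?thesis .
  qed
qed



lemma pd_invertible:
  assumes "pos_def_mat (Q::real^('n::{finite,linorder})^('n::{finite,linorder}))"
  shows "invertible Q"
proof -
  have "Q *v x = 0 \<longrightarrow> x = 0" for x
    using assms unfolding pos_def_mat_def by (metis inner_zero_right less_irrefl)
  then show ?thesis using matrix_left_invertible_ker(1) invertible_left_inverse by blast
qed

lemma pd_inv_sym:
  assumes "pos_def_mat (Q::real^('n::{finite,linorder})^('n::{finite,linorder}))"
  shows "transpose (matrix_inv Q) = matrix_inv Q"
proof -
  let ?P = "matrix_inv Q"
  have QP: "Q ** ?P = mat 1" and PQ: "?P ** Q = mat 1"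
    using matrix_inv_props[OF pd_invertible[OF assms]] by auto
  have QT: "transpose Q = Q" using assms by (simp add: pos_def_mat_def)
  have "transpose ?P ** Q = mat 1"
    using QP by (metis QT matrix_transpose_mul transpose_mat)
  then have "transpose ?P = (transpose ?P ** Q) ** ?P"
    by (metis QP matrix_mul_assoc matrix_mul_rid)
  also have "\<dots> = ?P" using \<open>transpose ?P ** Q = mat 1\<close> by (simp add: matrix_mul_lid)
  finally show ?thesis .
qed

lemma pd_inv_psd:
  assumes "pos_def_mat (Q::real^('n::{finite,linorder})^('n::{finite,linorder}))"
  shows "0 \<le> v \<bullet> (matrix_inv Q *v v)"
proof -
  let ?P = "matrix_inv Q"
  have QP: "Q ** ?P = mat 1"
    using matrix_inv_props[OF pd_invertible[OF assms]] by auto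
  define w where "w = ?P *v v"
  have v: "v = Q *v w" by (simp add: w_def matrix_vector_mul_assoc QP)
  have "0 \<le> w \<bullet> (Q *v w)"
    using assms unfolding pos_def_mat_def by (cases "w = 0") (auto intro: less_imp_le)
  have "v \<bullet> (?P *v v) = v \<bullet> w" by (simp add: w_def)
  also have "\<dots> = w \<bullet> (Q *v w)" using v by (simp add: inner_commute)
  finally show ?thesis using \<open>0 \<le> w \<bullet> (Q *v w)\<close> by simp
qed

lemma sym_form:
  assumes "transpose P = (P::real^'n^'n)"
  shows "u \<bullet> (P *v v) = v \<bullet> (P *v u)"
proof -
  have "u \<bullet> (P *v v) = (u v* P) \<bullet> v" by (simp add: dot_lmul_matrix)
  also have "u v* P = transpose P *v u" by simp
  finally show ?thesis using assms by (simp add: inner_commute)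
qed

lemma form_CS:
  assumes sym: "transpose P = (P::real^'n^'n)" and psd: "\<And>w. 0 \<le> w \<bullet> (P *v w)"
  shows "(u \<bullet> (P *v v))^2 \<le> (u \<bullet> (P *v u)) * (v \<bullet> (P *v v))"
proof -
  define a where "a = u \<bullet> (P *v u)"
  define b where "b = u \<bullet> (P *v v)"
  define c where "c = v \<bullet> (P *v v)"
  have bs: "v \<bullet> (P *v u) = b" using sym_form[OF sym] by (simp add: b_def)
  have ex: "0 \<le> c - 2*t*b + t^2 * a" for t
  proof -
    have "(v - t *\<^sub>R u) \<bullet> (P *v (v - t *\<^sub>R u)) = c - 2*t*b + t^2 * a"
      by (simp add: matrix_vector_mult_diff_distrib matrix_vector_mult_scaleR inner_diff_left
          inner_diff_right a_def b_def[symmetric] c_def bs power2_eq_square algebra_simps)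
    then show ?thesis using psd[of "v - t *\<^sub>R u"] by simp
  qed
  have a0: "0 \<le> a" using psd by (simp add: a_def)
  show ?thesis
  proof (cases "a = 0")
    case True
    have "b = 0"
    proof (rule ccontr)
      assume "b \<noteq> 0"
      have "0 \<le> c - 2 * ((c+1)/(2*b)) * b + ((c+1)/(2*b))^2 * a" by (rule ex)
      then show False using \<open>b \<noteq> 0\<close> True by (simp add: field_simps)
    qed
    then show ?thesis using True by (simp add: a_def b_def)
  next
    case False
    then have ap: "0 < a" using a0 by simp
    have "0 \<le> c - 2 * (b/a) * b + (b/a)^2 * a" by (rule ex)
    then have "0 \<le> c - b^2 / a" using ap by (simp add: power2_eq_square field_simps)
    then have "b^2 \<le> a * c" using ap by (simp add: field_simps)
    then show ?thesis by (simp add: a_def b_def c_def)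
  qed
qed

definition qn :: "real^'n^'n \<Rightarrow> real^'n \<Rightarrow> real" where
  "qn P v = sqrt (v \<bullet> (P *v v))"

lemma qn_triangle:
  assumes sym: "transpose P = (P::real^'n^'n)" and psd: "\<And>w. 0 \<le> w \<bullet> (P *v w)"
  shows "qn P (u + v) \<le> qn P u + qn P v"
proof -
  define a where "a = u \<bullet> (P *v u)"
  define b where "b = u \<bullet> (P *v v)"
  define c where "c = v \<bullet> (P *v v)"
  have bs: "v \<bullet> (P *v u) = b" using sym_form[OF sym] by (simp add: b_def)
  have a0: "0 \<le> a" and c0': "0 \<le> c" using psd by (auto simp: a_def c_def)
  have "b^2 \<le> a * c" using form_CS[OF sym psd] by (simp add: a_def b_def c_def)
  then have "b \<le> sqrt a * sqrt c"
    by (metis a0 c0' real_le_rsqrt real_sqrt_mult abs_le_square_iff abs_ge_self order_trans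
        mult_nonneg_nonneg real_sqrt_abs)
  have e: "(u + v) \<bullet> (P *v (u + v)) = a + 2*b + c"
    by (simp add: matrix_vector_right_distrib inner_add_left inner_add_right a_def b_def[symmetric] c_def bs)
  have "a + 2*b + c \<le> (sqrt a + sqrt c)^2"
    using \<open>b \<le> sqrt a * sqrt c\<close> a0 c0' by (simp add: power2_eq_square algebra_simps)
  then have "sqrt (a + 2*b + c) \<le> sqrt a + sqrt c"
    using a0 c0' by (simp add: real_le_lsqrt real_sqrt_le_iff) 
  then show ?thesis by (simp add: qn_def e a_def c_def)
qed

lemma qn_scale: "qn P (r *\<^sub>R v) = \<bar>r\<bar> * qn P v"
proof -
  have "(r *\<^sub>R v) \<bullet> (P *v (r *\<^sub>R v)) = (r*r) * (v \<bullet> (P *v v))"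
    by (simp add: matrix_vector_mult_scaleR)
  then have "qn P (r *\<^sub>R v) = sqrt (r*r) * sqrt (v \<bullet> (P *v v))"
    unfolding qn_def by (simp only: real_sqrt_mult)
  then show ?thesis by (simp add: qn_def)
qed

lemma qn_convex:
  assumes sym: "transpose P = (P::real^'n^'n)" and psd: "\<And>w. 0 \<le> w \<bullet> (P *v w)"
      and S: "convex S"
  shows "convex_on S (qn P)"
  unfolding convex_on_def
proof (intro conjI ballI allI impI S)
  fix x y and u v :: real
  assume "0 \<le> u" "0 \<le> v"
  then show "qn P (u *\<^sub>R x + v *\<^sub>R y) \<le> u * qn P x + v * qn P y"
    using qn_triangle[OF sym psd, of "u *\<^sub>R x" "v *\<^sub>R y"] by (simp add: qn_scale)
qed



lemma lyap_ineq:
  fixes Q A :: "real^('n::{finite,linorder})^('n::{finite,linorder})"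
  assumes Qpd: "pos_def_mat Q"
    and lyap: "neg_semidef_mat (A ** Q + Q ** transpose A + (2 * \<alpha>) *\<^sub>R Q)"
  shows "(A *v \<epsilon>) \<bullet> (matrix_inv Q *v \<epsilon>) \<le> - \<alpha> * (\<epsilon> \<bullet> (matrix_inv Q *v \<epsilon>))"
proof -
  let ?P = "matrix_inv Q"
  have QP: "Q ** ?P = mat 1"
    using matrix_inv_props[OF pd_invertible[OF Qpd]] by auto
  have QT: "transpose Q = Q" using Qpd by (simp add: pos_def_mat_def)
  define v where "v = ?P *v \<epsilon>"
  have Qv: "Q *v v = \<epsilon>" by (simp add: v_def matrix_vector_mul_assoc QP)
  have "(A ** Q + Q ** transpose A + (2 * \<alpha>) *\<^sub>R Q) *v v
        = A *v \<epsilon> + Q *v (v v* A) + (2 * \<alpha>) *\<^sub>R \<epsilon>"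
  proof -
    have "(A ** Q + Q ** transpose A + (2 * \<alpha>) *\<^sub>R Q) *v v
        = (A ** Q) *v v + (Q ** transpose A) *v v + ((2 * \<alpha>) *\<^sub>R Q) *v v"
      by (simp only: matrix_vector_mult_add_rdistrib)
    also have "(A ** Q) *v v = A *v \<epsilon>" by (simp only: matrix_vector_mul_assoc[symmetric] Qv)
    also have "(Q ** transpose A) *v v = Q *v (v v* A)"
      by (simp only: matrix_vector_mul_assoc[symmetric] transpose_matrix_vector)
    also have "((2 * \<alpha>) *\<^sub>R Q) *v v = (2 * \<alpha>) *\<^sub>R \<epsilon>"
      by (simp only: scaleR_matrix_vector_assoc[symmetric] Qv)
    finally show ?thesis .
  qed
  moreover have "v \<bullet> (Q *v (v v* A)) = v \<bullet> (A *v \<epsilon>)"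
    using sym_form[OF QT, of v "v v* A"] by (simp add: Qv dot_lmul_matrix)
  ultimately have "v \<bullet> ((A ** Q + Q ** transpose A + (2 * \<alpha>) *\<^sub>R Q) *v v)
        = 2 * (v \<bullet> (A *v \<epsilon>)) + 2 * \<alpha> * (v \<bullet> \<epsilon>)"
    by (simp add: inner_add_right)
  moreover have "v \<bullet> ((A ** Q + Q ** transpose A + (2 * \<alpha>) *\<^sub>R Q) *v v) \<le> 0"
    using lyap by (simp add: neg_semidef_mat_def)
  ultimately show ?thesis by (simp add: v_def inner_commute)
qed

lemma lyap_decay:
  fixes Q A :: "real^('n::{finite,linorder})^('n::{finite,linorder})"
    and e :: "real \<Rightarrow> real^('n::{finite,linorder})"
  assumes Qpd: "pos_def_mat Q"
    and lyap: "neg_semidef_mat (A ** Q + Q ** transpose A + (2 * \<alpha>) *\<^sub>R Q)"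
    and de: "\<forall>t\<ge>0. (e has_vector_derivative (A *v e t)) (at t within {0..})"
    and t: "0 \<le> t"
  shows "e t \<bullet> (matrix_inv Q *v e t) \<le> exp (- (2 * \<alpha>) * t) * (e 0 \<bullet> (matrix_inv Q *v e 0))"
proof -
  let ?P = "matrix_inv Q"
  have Psym: "transpose ?P = ?P" by (rule pd_inv_sym[OF Qpd])
  define V where "V s = e s \<bullet> (?P *v e s)" for s
  define W where "W s = exp (2 * \<alpha> * s) * V s" for s
  have dV: "(V has_real_derivative 2 * ((A *v e s) \<bullet> (?P *v e s))) (at s within {0..})"
    if "0 \<le> s" for s
  proof -
    have d1: "(e has_vector_derivative (A *v e s)) (at s within {0..})" using de that by auto
    have d2: "((\<lambda>s. ?P *v e s) has_vector_derivative (?P *v (A *v e s))) (at s within {0..})"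
      by (rule bounded_linear.has_vector_derivative[OF matrix_vector_mul_bounded_linear d1])
    have "(V has_vector_derivative (e s \<bullet> (?P *v (A *v e s)) + (A *v e s) \<bullet> (?P *v e s))) (at s within {0..})"
      unfolding V_def by (rule bounded_bilinear.has_vector_derivative[OF bounded_bilinear_inner d1 d2])
    moreover have "e s \<bullet> (?P *v (A *v e s)) = (A *v e s) \<bullet> (?P *v e s)"
      by (rule sym_form[OF Psym])
    ultimately show ?thesis
      by (simp add: has_real_derivative_iff_has_vector_derivative)
  qed
  have dW: "(W has_real_derivative exp (2 * \<alpha> * s) * (2 * \<alpha> * V s + 2 * ((A *v e s) \<bullet> (?P *v e s))))
            (at s within {0..})" if "0 \<le> s" for s
  proof -
    have e1: "((\<lambda>s. exp (2 * \<alpha> * s)) has_real_derivative exp (2 * \<alpha> * s) * (2 * \<alpha>)) (at s within {0..})"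
      using DERIV_fun_exp[OF DERIV_cmult_Id[of "2 * \<alpha>" s UNIV]] by (rule has_field_derivative_at_within)
    have "(W has_real_derivative exp (2 * \<alpha> * s) * (2 * ((A *v e s) \<bullet> (?P *v e s))) + exp (2 * \<alpha> * s) * (2 * \<alpha>) * V s)
            (at s within {0..})"
      unfolding W_def by (rule DERIV_mult'[OF e1 dV[OF that]])
    moreover have "exp a * (2*X) + exp a * (2*\<alpha>) * Y = exp a * (2*\<alpha>*Y + 2*X)" for a X Y :: real
      by (simp add: algebra_simps)
    ultimately show ?thesis by (simp only:)
  qed
  have neg: "exp (2 * \<alpha> * s) * (2 * \<alpha> * V s + 2 * ((A *v e s) \<bullet> (?P *v e s))) \<le> 0" for s
  proof -
    have "(A *v e s) \<bullet> (?P *v e s) \<le> - \<alpha> * V s"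
      using lyap_ineq[OF Qpd lyap, of "e s"] by (simp add: V_def)
    then have "2 * \<alpha> * V s + 2 * ((A *v e s) \<bullet> (?P *v e s)) \<le> 0" by simp
    then show ?thesis by (simp add: mult_nonneg_nonpos)
  qed
  have "W t \<le> W 0"
  proof (rule DERIV_nonpos_imp_decreasing_open[OF t])
    fix s assume s: "0 < s" "s < t"
    have "(W has_real_derivative exp (2 * \<alpha> * s) * (2 * \<alpha> * V s + 2 * ((A *v e s) \<bullet> (?P *v e s))))
            (at s within {0<..})"
      using dW[of s] s by (auto intro: DERIV_subset)
    then have "(W has_real_derivative exp (2 * \<alpha> * s) * (2 * \<alpha> * V s + 2 * ((A *v e s) \<bullet> (?P *v e s))))
            (at s)"
      using s at_within_open[of s "{0<..}"] by simp
    then show "\<exists>y. (W has_real_derivative y) (at s) \<and> y \<le> 0" using neg by blast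
  next
    show "continuous_on {0..t} W"
      unfolding continuous_on_eq_continuous_within
    proof
      fix s assume "s \<in> {0..t}"
      then have "continuous (at s within {0..}) W"
        using DERIV_continuous[OF dW[of s]] by simp
      then show "continuous (at s within {0..t}) W"
        by (rule continuous_within_subset) auto
    qed
  qed
  then have "exp (2 * \<alpha> * t) * V t \<le> V 0" by (simp add: W_def)
  then have "exp (- (2 * \<alpha>) * t) * (exp (2 * \<alpha> * t) * V t) \<le> exp (- (2 * \<alpha>) * t) * V 0"
    by (rule mult_left_mono) simp
  moreover have "exp (- (2 * \<alpha>) * t) * (exp (2 * \<alpha> * t) * V t) = V t"
  proof -
    have "exp (- (2 * \<alpha>) * t) * exp (2 * \<alpha> * t) = 1"
      using exp_minus_inverse[of "2 * \<alpha> * t"] by (simp add: mult.commute)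
    then show ?thesis by (metis mult.assoc mult_1)
  qed
  ultimately have "V t \<le> exp (- (2 * \<alpha>) * t) * V 0" by linarith
  then show ?thesis by (simp add: V_def)
qed



lemma aff_hull_image:
  assumes "linear g"
  shows "(\<lambda>w. k + g w) ` (convex hull S) = convex hull ((\<lambda>w. k + g w) ` S)"
proof -
  have e: "(\<lambda>w. k + g w) ` T = (\<lambda>x. k + x) ` (g ` T)" for T by (simp add: image_image)
  show ?thesis unfolding e convex_hull_translation convex_hull_linear_image[OF assms] ..
qed

lemma unit_cube_cart: "cbox (0::real^'n) 1 = convex hull {x. \<forall>i. (x$i = 0) \<or> (x$i = 1)}"
  unfolding Cart_1 unit_interval_convex_hull[where 'a="real^'n"] box_real[symmetric]
  by (rule arg_cong[where f="\<lambda>x. convex hull x"]) (simp add: Basis_vec_def inner_axis)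

lemma box_hull:
  fixes alo ahi a blo bhi b :: "real^'n"
    and L :: "(real^'n) \<times> (real^'n) \<Rightarrow> 'b::real_vector"
  assumes a_box: "\<forall>i. alo $ i \<le> a $ i \<and> a $ i \<le> ahi $ i"
    and b_box: "\<forall>i. blo $ i \<le> b $ i \<and> b $ i \<le> bhi $ i"
    and L: "linear L"
  shows "c + L (a, b) \<in> convex hull ((\<lambda>(p, q). c + L (p, q)) `
           {(p, q). \<forall>i. (p $ i = alo $ i \<or> p $ i = ahi $ i) \<and> (q $ i = blo $ i \<or> q $ i = bhi $ i)})"
proof -
  define V1 where "V1 = {x::real^'n. \<forall>i. x$i = 0 \<or> x$i = 1}"
  define corners where "corners = {(p::real^'n, q::real^'n). \<forall>i. (p $ i = alo $ i \<or> p $ i = ahi $ i) \<and> (q $ i = blo $ i \<or> q $ i = bhi $ i)}"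
  have cube: "cbox (0::real^'n) 1 \<times> cbox (0::real^'n) 1 = convex hull (V1 \<times> V1)"
    by (simp add: convex_hull_Times V1_def unit_cube_cart)
  define D where "D w = ((\<chi> i. (ahi$i - alo$i) * fst w $ i), (\<chi> i. (bhi$i - blo$i) * snd w $ i))"
    for w :: "(real^'n) \<times> (real^'n)"
  have linD: "linear D"
    by (rule linearI) (auto simp: D_def vec_eq_iff algebra_simps)
  define \<psi> where "\<psi> w = (alo, blo) + D w" for w
  define k where "k = c + L (alo, blo)"
  have Phi: "c + L (\<psi> w) = k + (L \<circ> D) w" for w
    by (simp add: \<psi>_def k_def linear_add[OF L])
  define w0 where "w0 = ((\<chi> i. (a$i - alo$i) / (ahi$i - alo$i)), (\<chi> i. (b$i - blo$i) / (bhi$i - blo$i)))"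
  have frac: "0 \<le> (x - l) / (h - l) \<and> (x - l) / (h - l) \<le> 1" if "l \<le> x" "x \<le> h" for x l h :: real
  proof (cases "h = l")
    case False
    then have "0 < h - l" using that by simp
    then show ?thesis using that by (simp add: divide_le_eq_1)
  qed simp
  have w0_in: "w0 \<in> cbox 0 1 \<times> cbox 0 1"
  proof -
    have "\<forall>i. 0 \<le> (a$i - alo$i)/(ahi$i - alo$i) \<and> (a$i - alo$i)/(ahi$i - alo$i) \<le> 1"
      using a_box frac by blast
    moreover have "\<forall>i. 0 \<le> (b$i - blo$i)/(bhi$i - blo$i) \<and> (b$i - blo$i)/(bhi$i - blo$i) \<le> 1"
      using b_box frac by blast
    ultimately show ?thesis by (simp add: w0_def mem_box_cart)
  qed
  have frac2: "l + (h - l) * ((x - l) / (h - l)) = x" if "l \<le> x" "x \<le> h" for x l h :: real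
    using that by (cases "h = l") auto
  have psi_w0: "\<psi> w0 = (a, b)"
    using a_box b_box frac2 by (simp add: \<psi>_def D_def w0_def vec_eq_iff)
  have psiV: "\<psi> w \<in> corners" if "w \<in> V1 \<times> V1" for w
    using that by (auto simp: \<psi>_def D_def V1_def corners_def)
  have "c + L (a, b) = k + (L \<circ> D) w0" using Phi[of w0] psi_w0 by simp
  also have "\<dots> \<in> (\<lambda>w. k + (L \<circ> D) w) ` (convex hull (V1 \<times> V1))"
    using w0_in cube by auto
  also have "\<dots> = convex hull ((\<lambda>w. k + (L \<circ> D) w) ` (V1 \<times> V1))"
    by (rule aff_hull_image) (intro linear_compose linD L)
  also have "\<dots> \<subseteq> convex hull ((\<lambda>(p, q). c + L (p, q)) ` corners)"
  proof (rule hull_mono, rule subsetI)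
    fix y assume "y \<in> (\<lambda>w. k + (L \<circ> D) w) ` (V1 \<times> V1)"
    then obtain w where w: "w \<in> V1 \<times> V1" "y = k + (L \<circ> D) w" by blast
    then have "\<psi> w \<in> corners" by (intro psiV)
    moreover have "y = (\<lambda>(p, q). c + L (p, q)) (\<psi> w)"
      using Phi[of w] w(2) by (simp add: case_prod_beta)
    ultimately show "y \<in> (\<lambda>(p, q). c + L (p, q)) ` corners" by blast
  qed
  finally show ?thesis by (simp add: corners_def)
qed

lemma finite_corners:
  fixes alo ahi blo bhi :: "real^'n"
  shows "finite {(p, q). \<forall>i. (p $ i = alo $ i \<or> p $ i = ahi $ i) \<and> (q $ i = blo $ i \<or> q $ i = bhi $ i)}"
proof -
  have fv: "finite {p::real^'n. \<forall>i. p $ i = l $ i \<or> p $ i = h $ i}" for l h :: "real^'n"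
  proof (rule finite_subset)
    show "{p::real^'n. \<forall>i. p $ i = l $ i \<or> p $ i = h $ i} \<subseteq> vec_lambda ` (PiE UNIV (\<lambda>i. {l $ i, h $ i}))"
    proof
      fix p :: "real^'n" assume "p \<in> {p. \<forall>i. p $ i = l $ i \<or> p $ i = h $ i}"
      then have "(\<lambda>i. p $ i) \<in> PiE UNIV (\<lambda>i. {l $ i, h $ i})" by auto
      then show "p \<in> vec_lambda ` (PiE UNIV (\<lambda>i. {l $ i, h $ i}))"
        by (metis image_eqI vec_nth_inverse)
    qed
    show "finite (vec_lambda ` (PiE UNIV (\<lambda>i. {l $ i, h $ i})))"
      by (intro finite_imageI finite_PiE) auto
  qed
  show ?thesis
    by (rule finite_subset[OF _ finite_cartesian_product[OF fv[of alo ahi] fv[of blo bhi]]]) auto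
qed

lemma extreme_max:
  fixes S :: "'a::euclidean_space set"
  assumes S: "finite S" and z: "z \<in> convex hull S" and f: "convex_on UNIV f"
  shows "\<exists>y\<in>S. y extreme_point_of (convex hull S) \<and> f z \<le> f y"
proof -
  define K where "K = convex hull S"
  define E where "E = {x. x extreme_point_of K}"
  have cK: "compact K" unfolding K_def by (intro compact_convex_hull finite_imp_compact S)
  have KE: "K = convex hull E" unfolding E_def by (rule Krein_Milman_Minkowski[OF cK]) (simp add: K_def)
  have ES: "E \<subseteq> S" unfolding E_def K_def using extreme_point_of_convex_hull by blast
  then have fE: "finite E" using S finite_subset by blast
  have "E \<noteq> {}" using z KE K_def by auto
  define m where "m = Max (f ` E)"
  have "m \<in> f ` E" unfolding m_def using fE \<open>E \<noteq> {}\<close> by (intro Max_in) auto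
  then obtain y where y: "y \<in> E" "f y = m" by auto
  have bound: "\<forall>x\<in>E. f x \<le> f y" using fE y by (auto simp: m_def)
  have "convex_on (convex hull E) f"
    by (rule convex_on_subset[OF f]) auto
  then have "f z \<le> f y"
    using convex_on_convex_hull_bound[of E f "f y"] bound z KE K_def by auto
  moreover have "y extreme_point_of (convex hull S)" using y(1) by (simp add: E_def K_def)
  ultimately show ?thesis using ES y(1) by blast
qed



theorem theorem1:
  fixes ahat a alo ahi b blo bhi :: "real^('n::{finite,linorder})"
    and u y :: "real \<Rightarrow> real"
    and x th_y th_u :: "real \<Rightarrow> real^('n::{finite,linorder})"
    and Q :: "real^('n::{finite,linorder})^('n::{finite,linorder})"
    and \<alpha> :: real
  defines "A0 \<equiv> obs_canon ahat"
  defines "Ey \<equiv> (\<lambda>t. matrix_inv (obsv_mat c0 A0) ** transpose (ctrb_mat (transpose A0) (th_y t)))"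
  defines "Eu \<equiv> (\<lambda>t. matrix_inv (obsv_mat c0 A0) ** transpose (ctrb_mat (transpose A0) (th_u t)))"
  defines "xh \<equiv> (\<lambda>a' b' t. Ey t *v (ahat - a') + Eu t *v b')"
  defines "corners \<equiv> {(a', b'). \<forall>i. (a' $ i = alo $ i \<or> a' $ i = ahi $ i)
                                   \<and> (b' $ i = blo $ i \<or> b' $ i = bhi $ i)}"
  defines "eps0 \<equiv> x 0 - xh a b 0"
  assumes stable: "strictly_stable_canon ahat"
    and a_box: "\<forall>i. alo $ i \<le> a $ i \<and> a $ i \<le> ahi $ i"
    and b_box: "\<forall>i. blo $ i \<le> b $ i \<and> b $ i \<le> bhi $ i"
    and x_ode: "\<forall>t\<ge>0. (x has_vector_derivative
                 (A0 *v x t + y t *\<^sub>R (ahat - a) + u t *\<^sub>R b)) (at t within {0..})"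
    and y_out: "\<forall>t\<ge>0. y t = c0 \<bullet> x t"
    and th_y_ode: "\<forall>t\<ge>0. (th_y has_vector_derivative
                 (transpose A0 *v th_y t + y t *\<^sub>R c0)) (at t within {0..})"
    and th_u_ode: "\<forall>t\<ge>0. (th_u has_vector_derivative
                 (transpose A0 *v th_u t + u t *\<^sub>R c0)) (at t within {0..})"
    and Q_pd: "pos_def_mat Q"
    and lyap: "neg_semidef_mat (A0 ** Q + Q ** transpose A0 + (2 * \<alpha>) *\<^sub>R Q)"
  shows "\<forall>t\<ge>0. \<exists>a' b'. (a', b') \<in> corners
           \<and> xh a' b' t extreme_point_of (convex hull ((\<lambda>(p, q). xh p q t) ` corners))
           \<and> qnorm Q (x t) \<le> qnorm Q (xh a' b' t) + exp (- \<alpha> * t) * qnorm Q eps0"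
proof (intro allI impI)
  fix t :: real assume t: "0 \<le> t"
  define C where "C = obsv_mat c0 A0"
  define Lm where "Lm \<beta> = matrix_inv C ** Mb A0 \<beta>" for \<beta>
  define P where "P = matrix_inv Q"
  have Psym: "transpose P = P" unfolding P_def by (rule pd_inv_sym[OF Q_pd])
  have Ppsd: "\<And>w. 0 \<le> w \<bullet> (P *v w)" unfolding P_def by (rule pd_inv_psd[OF Q_pd])
  have qn_eq: "qnorm Q v = qn P v" for v by (simp add: qnorm_def qn_def P_def)
  have E_eq: "(matrix_inv C ** transpose (ctrb_mat (transpose A0) th)) *v \<beta> = Lm \<beta> *v th" for th \<beta>
    by (simp only: Lm_def matrix_vector_mul_assoc[symmetric] ctrb_eq)
  have xh_eq: "xh p q s = Lm (ahat - p) *v th_y s + Lm q *v th_u s" for p q s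
    by (simp add: xh_def Ey_def Eu_def C_def[symmetric] E_eq)
  have Lc0: "Lm \<beta> *v c0 = \<beta>" for \<beta>
    unfolding Lm_def C_def A0_def by (rule L_props(1))
  have LAT: "Lm \<beta> *v (transpose A0 *v th) = A0 *v (Lm \<beta> *v th)" for \<beta> th
    unfolding Lm_def C_def A0_def by (rule L_props(2))
  have dL: "((\<lambda>s. Lm \<beta> *v th s) has_vector_derivative (A0 *v (Lm \<beta> *v th s) + w s *\<^sub>R \<beta>)) (at s within {0..})"
    if "\<forall>s\<ge>0. (th has_vector_derivative (transpose A0 *v th s + w s *\<^sub>R c0)) (at s within {0..})"
       "0 \<le> s" for th w \<beta> s
  proof -
    have "((\<lambda>s. Lm \<beta> *v th s) has_vector_derivative (Lm \<beta> *v (transpose A0 *v th s + w s *\<^sub>R c0))) (at s within {0..})"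
      using that by (intro bounded_linear.has_vector_derivative[OF matrix_vector_mul_bounded_linear]) auto
    then show ?thesis
      using LAT[of \<beta> "th s"] by (simp add: matrix_vector_right_distrib matrix_vector_mult_scaleR Lc0)
  qed
  define e where "e s = x s - xh a b s" for s
  have de: "\<forall>s\<ge>0. (e has_vector_derivative (A0 *v e s)) (at s within {0..})"
  proof (intro allI impI)
    fix s :: real assume s: "0 \<le> s"
    have d1: "((\<lambda>s. Lm (ahat - a) *v th_y s) has_vector_derivative (A0 *v (Lm (ahat - a) *v th_y s) + y s *\<^sub>R (ahat - a))) (at s within {0..})"
      using th_y_ode s by (intro dL) auto
    have d2: "((\<lambda>s. Lm b *v th_u s) has_vector_derivative (A0 *v (Lm b *v th_u s) + u s *\<^sub>R b)) (at s within {0..})"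
      using th_u_ode s by (intro dL) auto
    have "(e has_vector_derivative ((A0 *v x s + y s *\<^sub>R (ahat - a) + u s *\<^sub>R b)
           - ((A0 *v (Lm (ahat - a) *v th_y s) + y s *\<^sub>R (ahat - a)) + (A0 *v (Lm b *v th_u s) + u s *\<^sub>R b))))
          (at s within {0..})"
      unfolding e_def xh_eq
      by (intro has_vector_derivative_diff has_vector_derivative_add d1 d2) (use x_ode s in auto)
    moreover have "(A0 *v x s + y s *\<^sub>R (ahat - a) + u s *\<^sub>R b)
           - ((A0 *v (Lm (ahat - a) *v th_y s) + y s *\<^sub>R (ahat - a)) + (A0 *v (Lm b *v th_u s) + u s *\<^sub>R b))
           = A0 *v e s"
      by (simp add: e_def xh_eq matrix_vector_mult_diff_distrib matrix_vector_right_distrib)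
    ultimately show "(e has_vector_derivative (A0 *v e s)) (at s within {0..})" by simp
  qed
  have decay: "e t \<bullet> (P *v e t) \<le> exp (- (2 * \<alpha>) * t) * (e 0 \<bullet> (P *v e 0))"
    unfolding P_def by (rule lyap_decay[OF Q_pd lyap de t])
  have ex2: "exp (- (2 * \<alpha>) * t) = exp (- \<alpha> * t) * exp (- \<alpha> * t)"
  proof -
    have "- (2 * \<alpha>) * t = (- \<alpha> * t) + (- \<alpha> * t)" by simp
    then show ?thesis by (simp only: exp_add)
  qed
  have qe: "qn P (e t) \<le> exp (- \<alpha> * t) * qn P eps0"
  proof -
    have "qn P (e t) \<le> sqrt (exp (- (2 * \<alpha>) * t) * (e 0 \<bullet> (P *v e 0)))"
      unfolding qn_def using decay by (rule real_sqrt_le_mono)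
    also have "\<dots> = sqrt (exp (- \<alpha> * t) * exp (- \<alpha> * t)) * sqrt (e 0 \<bullet> (P *v e 0))"
      by (simp only: ex2 real_sqrt_mult)
    also have "\<dots> = exp (- \<alpha> * t) * qn P eps0"
      by (simp add: qn_def eps0_def e_def)
    finally show ?thesis .
  qed
  define cc where "cc = Ey t *v ahat"
  define L where "L w = Eu t *v snd w - Ey t *v fst w" for w :: "(real^('n::{finite,linorder})) \<times> (real^('n::{finite,linorder}))"
  have linL: "linear L"
    by (rule linearI) (auto simp: L_def matrix_vector_right_distrib matrix_vector_mult_scaleR algebra_simps)
  have xhL: "xh p q t = cc + L (p, q)" for p q
    by (simp add: xh_def cc_def L_def matrix_vector_mult_diff_distrib)
  have img: "(\<lambda>(p, q). xh p q t) = (\<lambda>(p, q). cc + L (p, q))"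
    by (simp add: xhL)
  have inhull: "xh a b t \<in> convex hull ((\<lambda>(p, q). xh p q t) ` corners)"
    unfolding img xhL corners_def by (rule box_hull[OF a_box b_box linL])
  have finS: "finite ((\<lambda>(p, q). xh p q t) ` corners)"
    unfolding corners_def by (intro finite_imageI finite_corners)
  have cvx: "convex_on UNIV (qn P)" by (rule qn_convex[OF Psym Ppsd]) simp
  obtain z where z: "z \<in> (\<lambda>(p, q). xh p q t) ` corners"
      "z extreme_point_of (convex hull ((\<lambda>(p, q). xh p q t) ` corners))"
      "qn P (xh a b t) \<le> qn P z"
    using extreme_max[OF finS inhull cvx] by blast
  then obtain a' b' where ab: "(a', b') \<in> corners" "z = xh a' b' t" by auto
  have "qn P (x t) = qn P (xh a b t + e t)" by (simp add: e_def)
  also have "\<dots> \<le> qn P (xh a b t) + qn P (e t)" by (rule qn_triangle[OF Psym Ppsd])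
  also have "\<dots> \<le> qn P (xh a' b' t) + exp (- \<alpha> * t) * qn P eps0"
    using z(3) qe ab(2) by simp
  finally have "qnorm Q (x t) \<le> qnorm Q (xh a' b' t) + exp (- \<alpha> * t) * qnorm Q eps0"
    by (simp add: qn_eq)
  then show "\<exists>a' b'. (a', b') \<in> corners
           \<and> xh a' b' t extreme_point_of (convex hull ((\<lambda>(p, q). xh p q t) ` corners))
           \<and> qnorm Q (x t) \<le> qnorm Q (xh a' b' t) + exp (- \<alpha> * t) * qnorm Q eps0"
    using ab z(2) by blast
qed

end
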